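(* Let $u$ be a fast decreasing distribution on $\mathbb R^D$ (acting on $\mathbb C[\boldsymbol x]$), $\mathcal Q_2\in\mathbb C[\boldsymbol x]$ with $Z(\mathcal Q_2)\cap\operatorname{supp}u=\varnothing$, and $\check u$ a linear functional on $\mathbb C[\boldsymbol x]$ with $\mathcal Q_2\check u=u$; assume $u,\check u$ quasi-definite, and let $R=\langle\check u,P(\boldsymbol x)\chi(\boldsymbol x)^\top\rangle$. Then for every $k\ge1$ $$\check P_{[k]}(\boldsymbol x)=\Theta_*\begin{pmatrix}R_{[0],[0]}&\cdots&R_{[0],[k-1]}&P_{[0]}(\boldsymbol x)\\ \vdots&&\vdots&\vdots\\ R_{[k],[0]}&\cdots&R_{[k],[k-1]}&P_{[k]}(\boldsymbol x)\end{pmatrix},\qquad \check H_{[k]}=\Theta_*\big(R^{[k+1]}\big).$$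
   Context: $D\ge1$, $\boldsymbol x=(x_1,\dots,x_D)^\top$. $[k]=\{\boldsymbol\alpha\in\mathbb Z_+^D:|\boldsymbol\alpha|=k\}$; multi-indices ordered by graded lexicographic order; $\chi(\boldsymbol x)$ the semi-infinite vector of monomials in this order with blocks $\chi_{[k]}$; semi-infinite matrices partitioned in blocks $A_{[k],[l]}\in\mathbb C^{|[k]|\times|[l]|}$, $A^{[k]}$ the truncation to block rows/columns $0,\dots,k-1$. For a linear functional $u$ on $\mathbb C[\boldsymbol x]$ (applied entrywise), $\langle Qu,P\rangle:=\langle u,QP\rangle$; moment matrix $G=\langle u,\chi\chi^\top\rangle$; quasi-definite means $\det G^{[k]}\ne0$ for all $k$, giving $G=S^{-1}HS^{-\top}$ with $S$ block lower unitriangular and $H$ block diagonal with blocks $H_{[k]}$ (quasi-tau matrices); monic orthogonal polynomials $P(\boldsymbol x)=S\chi(\boldsymbol x)$ with blocks $P_{[k]}$. Checked symbols ($\check P_{[k]},\check H_{[k]}$) refer to $\check u$. Last quasi-determinant: for $M=\begin{pmatrix}A&B\\C&D\end{pmatrix}$ with $A$ square invertible (here the last block row and last block column are those displayed last), $\Theta_*(M)=D-CA^{-1}B$. *)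

theory Defs
  imports "HOL-Library.Poly_Mapping" "Jordan_Normal_Form.Determinant" "Jordan_Normal_Form.Gauss_Jordan_Elimination"
begin

(* Multivariate polynomials over C: coefficients indexed by exponent maps (variable i is x_(i+1)). *)
type_synonym mpoly = "(nat \<Rightarrow>\<^sub>0 nat) \<Rightarrow>\<^sub>0 complex"

definition pring :: "nat \<Rightarrow> mpoly set" where
  "pring D = {p. \<forall>m\<in>Poly_Mapping.keys p. Poly_Mapping.keys m \<subseteq> {..<D}}"

definition csmult :: "complex \<Rightarrow> mpoly \<Rightarrow> mpoly" where
  "csmult c p = Poly_Mapping.single 0 c * p"

definition lin_fun :: "nat \<Rightarrow> (mpoly \<Rightarrow> complex) \<Rightarrow> bool" where
  "lin_fun D u \<longleftrightarrow> (\<forall>p\<in>pring D. \<forall>q\<in>pring D. u (p + q) = u p + u q) \<and>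
                    (\<forall>c. \<forall>p\<in>pring D. u (csmult c p) = c * u p)"

(* multi-indices of length D and total degree k, in (descending) lexicographic order:
   (k,0,..,0) first *)
fun mis :: "nat \<Rightarrow> nat \<Rightarrow> nat list list" where
  "mis 0 k = (if k = 0 then [[]] else [])"
| "mis (Suc d) k = concat (map (\<lambda>i. map (\<lambda>b. i # b) (mis d (k - i))) (rev [0..<Suc k]))"

(* all multi-indices of degree < n, graded lexicographic order *)
definition mono_list :: "nat \<Rightarrow> nat \<Rightarrow> nat list list" where
  "mono_list D n = concat (map (mis D) [0..<n])"

(* bs D k = number of multi-indices of degree < k = size of the truncation A^[k] *)
definition bs :: "nat \<Rightarrow> nat \<Rightarrow> nat" where
  "bs D k = length (mono_list D k)"

(* the n-th multi-index (position n, counting from 0) of the semi-infinite vector chi *)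
definition ix :: "nat \<Rightarrow> nat \<Rightarrow> nat list" where
  "ix D n = mono_list D (Suc n) ! n"

(* degree, i.e. block number, of position n *)
definition blk :: "nat \<Rightarrow> nat \<Rightarrow> nat" where
  "blk D n = sum_list (ix D n)"

definition mexp :: "nat list \<Rightarrow> (nat \<Rightarrow>\<^sub>0 nat)" where
  "mexp a = (\<Sum>i<length a. Poly_Mapping.single i (a ! i))"

definition xmon :: "nat list \<Rightarrow> mpoly" where
  "xmon a = Poly_Mapping.single (mexp a) 1"

definition peval :: "(nat \<Rightarrow> complex) \<Rightarrow> mpoly \<Rightarrow> complex" where
  "peval x p = (\<Sum>m\<in>Poly_Mapping.keys p. Poly_Mapping.lookup p m * (\<Prod>i\<in>Poly_Mapping.keys m. x i ^ Poly_Mapping.lookup m i))"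

(* semi-infinite matrices are functions nat => nat => complex (positions in graded lex order) *)
type_synonym smat = "nat \<Rightarrow> nat \<Rightarrow> complex"

(* truncation A^[k]: block rows/columns 0..k-1 *)
definition trunc :: "nat \<Rightarrow> smat \<Rightarrow> nat \<Rightarrow> complex mat" where
  "trunc D A k = mat (bs D k) (bs D k) (\<lambda>(i, j). A i j)"

(* moment matrix G = <u, chi chi^T> *)
definition moment_mat :: "nat \<Rightarrow> (mpoly \<Rightarrow> complex) \<Rightarrow> smat" where
  "moment_mat D u i j = u (xmon (ix D i) * xmon (ix D j))"

definition quasi_definite :: "nat \<Rightarrow> (mpoly \<Rightarrow> complex) \<Rightarrow> bool" where
  "quasi_definite D u \<longleftrightarrow> (\<forall>k. det (trunc D (moment_mat D u) k) \<noteq> 0)"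

definition block_lower_unitriangular :: "nat \<Rightarrow> smat \<Rightarrow> bool" where
  "block_lower_unitriangular D S \<longleftrightarrow>
     (\<forall>i j. blk D i < blk D j \<longrightarrow> S i j = 0) \<and>
     (\<forall>i j. blk D i = blk D j \<longrightarrow> S i j = (if i = j then 1 else 0))"

definition block_diagonal :: "nat \<Rightarrow> smat \<Rightarrow> bool" where
  "block_diagonal D H \<longleftrightarrow> (\<forall>i j. blk D i \<noteq> blk D j \<longrightarrow> H i j = 0)"

(* G = S^{-1} H S^{-T} with S block lower unitriangular and H block diagonal; since S is block
   lower triangular this holds iff it holds for every truncation *)
definition gauss_fact :: "nat \<Rightarrow> (mpoly \<Rightarrow> complex) \<Rightarrow> smat \<Rightarrow> smat \<Rightarrow> bool" where
  "gauss_fact D u S H \<longleftrightarrow> block_lower_unitriangular D S \<and> block_diagonal D H \<and>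
     (\<forall>k. trunc D (moment_mat D u) k =
           the (mat_inverse (trunc D S k)) * trunc D H k * transpose_mat (the (mat_inverse (trunc D S k))))"

(* P(x) = S chi(x): the entry at position i, as a polynomial *)
definition Ppol :: "nat \<Rightarrow> smat \<Rightarrow> nat \<Rightarrow> mpoly" where
  "Ppol D S i = (\<Sum>j<bs D (Suc (blk D i)). csmult (S i j) (xmon (ix D j)))"

definition Rmat :: "nat \<Rightarrow> (mpoly \<Rightarrow> complex) \<Rightarrow> smat \<Rightarrow> smat" where
  "Rmat D uc S i j = uc (Ppol D S i * xmon (ix D j))"

(* last quasi-determinant: M = [[A,B],[C,D]] with A of size n x n; Theta_*(M) = D - C A^{-1} B *)
definition qdet_last :: "complex mat \<Rightarrow> nat \<Rightarrow> complex mat" where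
  "qdet_last M n = (case split_block M n n of (A, B, C, Dm) \<Rightarrow>
                      Dm - C * the (mat_inverse A) * B)"

definition Pblock :: "nat \<Rightarrow> smat \<Rightarrow> nat \<Rightarrow> (nat \<Rightarrow> complex) \<Rightarrow> complex mat" where
  "Pblock D S k x = mat (bs D (Suc k) - bs D k) 1 (\<lambda>(i, _). peval x (Ppol D S (bs D k + i)))"

definition Hblock :: "nat \<Rightarrow> smat \<Rightarrow> nat \<Rightarrow> complex mat" where
  "Hblock D H k = mat (bs D (Suc k) - bs D k) (bs D (Suc k) - bs D k)
                     (\<lambda>(i, j). H (bs D k + i) (bs D k + j))"

definition bordered :: "nat \<Rightarrow> smat \<Rightarrow> smat \<Rightarrow> nat \<Rightarrow> (nat \<Rightarrow> complex) \<Rightarrow> complex mat" where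
  "bordered D R S k x = mat (bs D (Suc k)) (Suc (bs D k))
      (\<lambda>(i, j). if j < bs D k then R i j else peval x (Ppol D S i))"

end

theory Submission
  imports Defs
begin


lemma mis_props: "\<forall>k. \<forall>a\<in>set (mis d k). sum_list a = k \<and> length a = d"
proof (induction d)
  case 0 then show ?case by auto
next
  case (Suc d) then show ?case by fastforce
qed

lemma mis_zero_ne: "mis d 0 \<noteq> []"
  by (induction d) auto

lemma mis_ne: "d \<ge> 1 \<Longrightarrow> mis d k \<noteq> []"
proof -
  assume "d \<ge> 1" then obtain e where d: "d = Suc e" by (cases d) auto
  have "k \<in> set (rev [0..<Suc k])" by auto
  then show ?thesis using d mis_zero_ne[of e] by (auto simp: concat_eq_Nil_conv)
qed

lemma bs_Suc: "bs D (Suc k) = bs D k + length (mis D k)"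
  by (simp add: bs_def mono_list_def)

lemma bs_0[simp]: "bs D 0 = 0" by (simp add: bs_def mono_list_def)

lemma bs_lt: "D \<ge> 1 \<Longrightarrow> bs D k < bs D (Suc k)"
  using mis_ne[of D k] by (simp add: bs_Suc)

lemma bs_ge: "D \<ge> 1 \<Longrightarrow> k \<le> bs D k"
proof (induction k)
  case (Suc k) then show ?case using bs_lt[of D k] by simp
qed simp

lemma bs_mono: "a \<le> b \<Longrightarrow> bs D a \<le> bs D b"
  by (induction b) (auto simp: bs_Suc le_Suc_eq)

lemma mono_list_split: "a \<le> b \<Longrightarrow> mono_list D b = mono_list D a @ concat (map (mis D) [a..<b])"
  unfolding mono_list_def
  by (metis concat_append le_Suc_ex map_append upt_add_eq_append zero_le)

lemma mono_list_nth: "i < bs D a \<Longrightarrow> i < bs D b \<Longrightarrow> mono_list D a ! i = mono_list D b ! i"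
proof (cases "a \<le> b")
  case True
  assume "i < bs D a" then show ?thesis using mono_list_split[OF True, of D]
    by (simp add: nth_append bs_def)
next
  case False
  assume "i < bs D b" then show ?thesis using mono_list_split[of b a D] False
    by (simp add: nth_append bs_def)
qed

lemma ix_eq: "D \<ge> 1 \<Longrightarrow> i < bs D N \<Longrightarrow> ix D i = mono_list D N ! i"
  unfolding ix_def
  by (rule mono_list_nth) (use bs_ge[of D "Suc i"] in auto)

lemma set_concat_mis: "a \<in> set (concat (map (mis D) ds)) \<Longrightarrow> sum_list a \<in> set ds \<and> length a = D"
  using mis_props[of D] by auto

lemma ix_props: assumes "D \<ge> 1" shows "length (ix D i) = D"
    and "i < bs D k \<longleftrightarrow> blk D i < k"
proof -
  have i: "i < bs D (Suc i)" using bs_ge[OF assms, of "Suc i"] by auto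
  have "ix D i \<in> set (mono_list D (Suc i))" unfolding ix_def using i by (simp add: bs_def)
  then show "length (ix D i) = D" unfolding mono_list_def using set_concat_mis by blast
  show "i < bs D k \<longleftrightarrow> blk D i < k"
  proof
    assume ik: "i < bs D k"
    have "ix D i \<in> set (mono_list D k)" using ix_eq[OF assms ik] ik by (simp add: bs_def)
    then show "blk D i < k" unfolding blk_def mono_list_def using set_concat_mis by fastforce
  next
    assume bk: "blk D i < k"
    show "i < bs D k"
    proof (rule ccontr)
      assume "\<not> i < bs D k"
      then have ge: "bs D k \<le> i" by simp
      let ?N = "max (Suc i) k"
      have iN: "i < bs D ?N" using i bs_mono[of "Suc i" ?N D] by auto
      have sp: "mono_list D ?N = mono_list D k @ concat (map (mis D) [k..<?N])"
        by (rule mono_list_split) auto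
      have "ix D i = concat (map (mis D) [k..<?N]) ! (i - bs D k)"
        using ix_eq[OF assms iN] sp ge by (simp add: nth_append bs_def)
      moreover have "i - bs D k < length (concat (map (mis D) [k..<?N]))"
        using iN sp ge by (simp add: bs_def)
      ultimately have "ix D i \<in> set (concat (map (mis D) [k..<?N]))" using nth_mem by metis
      then have "blk D i \<ge> k" unfolding blk_def using set_concat_mis by fastforce
      then show False using bk by simp
    qed
  qed
qed




lemma pring_add: "p \<in> pring D \<Longrightarrow> q \<in> pring D \<Longrightarrow> p + q \<in> pring D"
proof -
  assume a: "p \<in> pring D" "q \<in> pring D"
  show ?thesis unfolding pring_def mem_Collect_eq
  proof (intro ballI)
    fix m assume "m \<in> Poly_Mapping.keys (p + q)"
    then have "m \<in> Poly_Mapping.keys p \<or> m \<in> Poly_Mapping.keys q" using keys_add by fast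
    then show "Poly_Mapping.keys m \<subseteq> {..<D}" using a unfolding pring_def by auto
  qed
qed

lemma pring_zero: "0 \<in> pring D" unfolding pring_def by simp

lemma pring_mult: assumes "p \<in> pring D" "q \<in> pring D" shows "p * q \<in> pring D"
  unfolding pring_def mem_Collect_eq
proof (intro ballI)
  fix m assume "m \<in> Poly_Mapping.keys (p * q)"
  then obtain a b where "m = a + b" "a \<in> Poly_Mapping.keys p" "b \<in> Poly_Mapping.keys q" using keys_mult by blast
  then show "Poly_Mapping.keys m \<subseteq> {..<D}" using assms keys_add[of a b] unfolding pring_def by blast
qed

lemma pring_single0: "Poly_Mapping.single 0 c \<in> pring D" unfolding pring_def by simp

lemma pring_csmult: "p \<in> pring D \<Longrightarrow> csmult c p \<in> pring D"
  unfolding csmult_def by (rule pring_mult[OF pring_single0])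

lemma keys_mexp: "Poly_Mapping.keys (mexp a) \<subseteq> {..<length a}"
proof
  fix j assume "j \<in> Poly_Mapping.keys (mexp a)"
  then have "Poly_Mapping.lookup (mexp a) j \<noteq> 0" by (simp add: in_keys_iff)
  moreover have "j \<ge> length a \<Longrightarrow> Poly_Mapping.lookup (mexp a) j = 0"
    unfolding mexp_def lookup_sum by (intro sum.neutral) (auto simp: lookup_single when_def)
  ultimately show "j \<in> {..<length a}" by force
qed

lemma pring_xmon: "length a \<le> D \<Longrightarrow> xmon a \<in> pring D"
  unfolding pring_def xmon_def using keys_mexp by fastforce

lemma pring_sum: "(\<And>l. l \<in> A \<Longrightarrow> f l \<in> pring D) \<Longrightarrow> sum f A \<in> pring D"
  by (induction A rule: infinite_finite_induct) (auto intro: pring_add pring_zero)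

lemma lin_zero: assumes "lin_fun D u" shows "u 0 = 0"
proof -
  have "u (0 + 0) = u 0 + u 0" using assms pring_zero[of D] unfolding lin_fun_def by blast
  then show ?thesis by simp
qed

lemma lin_sum: assumes "lin_fun D u" "finite A" "\<And>l. l \<in> A \<Longrightarrow> f l \<in> pring D"
  shows "u (sum f A) = (\<Sum>l\<in>A. u (f l))"
  using assms(2,3)
proof (induction A rule: finite_induct)
  case empty then show ?case using lin_zero[OF assms(1)] by simp
next
  case (insert a A)
  have "u (sum f (insert a A)) = u (f a + sum f A)" using insert by simp
  also have "\<dots> = u (f a) + u (sum f A)"
  proof -
    have "f a \<in> pring D" "sum f A \<in> pring D" using insert.prems pring_sum[of A f D] by auto
    then show ?thesis using assms(1) unfolding lin_fun_def by blast
  qed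
  finally show ?case using insert by simp
qed

lemma blk_lt: "D \<ge> 1 \<Longrightarrow> N \<ge> bs D (Suc (blk D i)) \<Longrightarrow> l \<ge> N \<Longrightarrow> blk D i < blk D l"
  using ix_props(2)[of D l "Suc (blk D i)"] by auto

lemma ltri_zero: "D \<ge> 1 \<Longrightarrow> block_lower_unitriangular D S \<Longrightarrow> N \<ge> bs D (Suc (blk D i)) \<Longrightarrow> l \<ge> N \<Longrightarrow> S i l = 0"
  using blk_lt unfolding block_lower_unitriangular_def by blast

lemma sum_extend: assumes "D \<ge> 1" "block_lower_unitriangular D S" "N \<ge> bs D (Suc (blk D i))"
  shows "(\<Sum>l<bs D (Suc (blk D i)). S i l * g l) = (\<Sum>l<N. S i l * g l)"
  by (rule sum.mono_neutral_left) (use ltri_zero[OF assms(1,2) order_refl] assms(3) in auto)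

lemma Rmat_expand: assumes "D \<ge> 1" "lin_fun D uc" "block_lower_unitriangular D S"
    "N \<ge> bs D (Suc (blk D i))"
  shows "Rmat D uc S i j = (\<Sum>l<N. S i l * moment_mat D uc l j)"
proof -
  have xm: "xmon (ix D l) \<in> pring D" for l using pring_xmon ix_props(1)[OF assms(1)] by simp
  have e: "Ppol D S i * xmon (ix D j) = (\<Sum>l<bs D (Suc (blk D i)). csmult (S i l) (xmon (ix D l) * xmon (ix D j)))"
    unfolding Ppol_def sum_distrib_right csmult_def by (simp add: mult.assoc)
  have "Rmat D uc S i j = (\<Sum>l<bs D (Suc (blk D i)). uc (csmult (S i l) (xmon (ix D l) * xmon (ix D j))))"
    unfolding Rmat_def e by (rule lin_sum[OF assms(2)]) (auto intro: pring_csmult pring_mult xm)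
  also have "\<dots> = (\<Sum>l<bs D (Suc (blk D i)). S i l * moment_mat D uc l j)"
    using assms(2) pring_mult xm unfolding lin_fun_def moment_mat_def by simp
  finally show ?thesis using sum_extend[OF assms(1,3,4)] by simp
qed

definition evm :: "(nat \<Rightarrow> complex) \<Rightarrow> (nat \<Rightarrow>\<^sub>0 nat) \<Rightarrow> complex" where
  "evm x m = (\<Prod>i\<in>Poly_Mapping.keys m. x i ^ Poly_Mapping.lookup m i)"

lemma peval_K: assumes "finite K" "Poly_Mapping.keys p \<subseteq> K"
  shows "peval x p = (\<Sum>m\<in>K. Poly_Mapping.lookup p m * evm x m)"
  unfolding peval_def evm_def
  by (rule sum.mono_neutral_left) (use assms in \<open>auto simp: in_keys_iff\<close>)

lemma peval_add: "peval x (p + q) = peval x p + peval x q"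
proof -
  have f: "finite (Poly_Mapping.keys p \<union> Poly_Mapping.keys q)" by simp
  show ?thesis
    using peval_K[OF f, of "p+q" x] peval_K[OF f, of p x] peval_K[OF f, of q x] keys_add[of p q]
    by (simp add: lookup_add distrib_right sum.distrib)
qed

lemma peval_zero: "peval x 0 = 0" unfolding peval_def by simp

lemma peval_sum: "peval x (sum f A) = (\<Sum>l\<in>A. peval x (f l))"
  by (induction A rule: infinite_finite_induct) (auto simp: peval_zero peval_add)

lemma peval_csmult: "peval x (csmult c p) = c * peval x p"
proof -
  have e: "csmult c p = Poly_Mapping.map ((*) c) p" unfolding csmult_def by (simp add: mult_map_scale_conv_mult)
  have l: "Poly_Mapping.lookup (csmult c p) m = c * Poly_Mapping.lookup p m" for m
    unfolding e by (simp add: map.rep_eq when_def)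
  have k: "Poly_Mapping.keys (csmult c p) \<subseteq> Poly_Mapping.keys p" using l by (auto simp: in_keys_iff)
  show ?thesis using peval_K[OF finite_keys k, of x] peval_K[OF finite_keys order_refl, of x p]
    by (simp add: l sum_distrib_left mult.assoc)
qed

lemma peval_Ppol: assumes "D \<ge> 1" "block_lower_unitriangular D S" "N \<ge> bs D (Suc (blk D i))"
  shows "peval x (Ppol D S i) = (\<Sum>l<N. S i l * peval x (xmon (ix D l)))"
  unfolding Ppol_def peval_sum peval_csmult using sum_extend[OF assms] by simp




lemma schur_core:
  fixes L11 A Ai L21 B C Dd Z1 :: "'a::field mat"
  assumes c: "L11 \<in> carrier_mat m m" "A \<in> carrier_mat m m" "Ai \<in> carrier_mat m m"
    "L21 \<in> carrier_mat r m" "B \<in> carrier_mat m c" "C \<in> carrier_mat r m"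
    "Dd \<in> carrier_mat r c" "Z1 \<in> carrier_mat r m"
    and inv: "Ai * (L11 * A) = 1\<^sub>m m" and Z: "Z1 * A + C = 0\<^sub>m r m"
  shows "(L21 * B + Dd) - (L21 * A + C) * Ai * (L11 * B) = Z1 * B + Dd"
proof -
  have "(Ai * L11) * A = 1\<^sub>m m" using inv c by simp
  then have AAi: "A * (Ai * L11) = 1\<^sub>m m"
    by (rule mat_mult_left_right_inverse[rotated 2]) (use c in auto)
  have Ceq: "C = - (Z1 * A)"
  proof (rule eq_matI)
    fix i j assume ij: "i < dim_row (- (Z1 * A))" "j < dim_col (- (Z1 * A))"
    have "(Z1 * A + C) $$ (i, j) = 0" using Z ij c by simp
    then show "C $$ (i, j) = (- (Z1 * A)) $$ (i, j)" using ij c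
      by (simp add: eq_neg_iff_add_eq_0 add.commute)
  qed (use c in auto)
  define X where "X = L21 - Z1"
  have X: "X \<in> carrier_mat r m" using c unfolding X_def by (auto intro: minus_carrier_mat)
  have "L21 * A + C = X * A"
    unfolding Ceq X_def using c by (simp add: minus_mult_distrib_mat add_uminus_minus_mat[of _ r m])
  then have "(L21 * A + C) * Ai * (L11 * B) = X * (A * (Ai * L11) * B)"
  proof -
    have AAi: "A * Ai \<in> carrier_mat m m" and LB: "L11 * B \<in> carrier_mat m c" and AiL: "Ai * L11 \<in> carrier_mat m m"
      using c by auto
    have "X * A * Ai * (L11 * B) = X * (A * Ai) * (L11 * B)" using assoc_mult_mat[OF X c(2) c(3)] by simp
    also have "\<dots> = X * ((A * Ai) * (L11 * B))" using assoc_mult_mat[OF X AAi LB] .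
    also have "(A * Ai) * (L11 * B) = A * (Ai * (L11 * B))" using assoc_mult_mat[OF c(2) c(3) LB] .
    also have "Ai * (L11 * B) = (Ai * L11) * B" using assoc_mult_mat[OF c(3) c(1) c(5)] by simp
    also have "A * ((Ai * L11) * B) = (A * (Ai * L11)) * B" using assoc_mult_mat[OF c(2) AiL c(5)] by simp
    finally show ?thesis using \<open>L21 * A + C = X * A\<close> by simp
  qed
  also have "\<dots> = X * B" using AAi X c by simp
  also have "\<dots> = L21 * B - Z1 * B" unfolding X_def using c by (simp add: minus_mult_distrib_mat)
  finally have e: "(L21 * A + C) * Ai * (L11 * B) = L21 * B - Z1 * B" .
  show ?thesis unfolding e
    by (rule eq_matI) (use c in auto)
qed

lemma sum_split_add: "(\<Sum>l<(m::nat)+r. g l) = (\<Sum>l<m. g l) + (\<Sum>l<r. g (m+l))"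
  by (induction r) (auto simp: add.assoc)

lemma sum_delta_mult: "i < (r::nat) \<Longrightarrow> (\<Sum>l<r. (if i = l then 1 else 0) * (g l :: 'a::semiring_1)) = g i"
proof -
  assume "i < r"
  have "\<And>l. (if i = l then 1 else 0) * g l = (if i = l then g l else 0)" by simp
  moreover have "(\<Sum>l<r. if i = l then g l else 0) = g i" using sum.delta'[of "{..<r}" i g] \<open>i < r\<close> by simp
  ultimately show ?thesis by simp
qed

lemma inv_some: assumes "A \<in> carrier_mat n n" "det A \<noteq> (0::'a::field)"
  shows "\<exists>B. mat_inverse A = Some B \<and> A * B = 1\<^sub>m n \<and> B * A = 1\<^sub>m n \<and> B \<in> carrier_mat n n"
proof (cases "mat_inverse A")
  case None
  then show ?thesis using mat_inverse(1)[OF assms(1) None, of undefined]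
      det_non_zero_imp_unit[OF assms, of undefined] by blast
next
  case (Some B)
  then show ?thesis using mat_inverse(2)[OF assms(1) Some] by simp
qed

lemma schur_gen:
  fixes S Sc G :: smat and f :: "nat \<Rightarrow> nat \<Rightarrow> complex" and F :: "nat \<times> nat \<Rightarrow> complex"
  assumes mn: "m \<le> n"
    and Slow: "\<forall>i<m. \<forall>l. m \<le> l \<longrightarrow> l < n \<longrightarrow> S i l = 0"
    and Sdiag: "\<forall>i<n-m. \<forall>l<n-m. S (m+i) (m+l) = (if i = l then 1 else 0)"
    and L11det: "det (mat m m (\<lambda>(i,j). S i j)) \<noteq> 0"
    and Gdet: "det (mat m m (\<lambda>(i,j). G i j)) \<noteq> 0"
    and F1: "\<forall>i<n. \<forall>j<m. F (i,j) = (\<Sum>l<n. S i l * G l j)"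
    and F2: "\<forall>i<n. \<forall>j<c. F (i,m+j) = (\<Sum>l<n. S i l * f l j)"
    and Zc: "\<forall>i<n-m. \<forall>j<m. (\<Sum>l<m. Sc (m+i) l * G l j) + G (m+i) j = 0"
  shows "qdet_last (mat n (m+c) F) m = mat (n-m) c (\<lambda>(i,j). (\<Sum>l<m. Sc (m+i) l * f l j) + f (m+i) j)"
proof -
  define r where "r = n - m"
  have n: "n = m + r" using mn r_def by simp
  define L11 where "L11 = mat m m (\<lambda>(i,j). S i j)"
  define L21 where "L21 = mat r m (\<lambda>(i,j). S (m+i) j)"
  define Gk where "Gk = mat m m (\<lambda>(i,j). G i j)"
  define BG where "BG = mat m c (\<lambda>(i,j). f i j)"
  define CG where "CG = mat r m (\<lambda>(i,j). G (m+i) j)"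
  define DG where "DG = mat r c (\<lambda>(i,j). f (m+i) j)"
  define Z1 where "Z1 = mat r m (\<lambda>(i,j). Sc (m+i) j)"
  have c: "L11 \<in> carrier_mat m m" "Gk \<in> carrier_mat m m" "L21 \<in> carrier_mat r m" "BG \<in> carrier_mat m c"
    "CG \<in> carrier_mat r m" "DG \<in> carrier_mat r c" "Z1 \<in> carrier_mat r m"
    unfolding L11_def L21_def Gk_def BG_def CG_def DG_def Z1_def by auto
  have lowsum: "(\<Sum>l<n. S i l * g l) = (\<Sum>l<m. S i l * g l)" if "i < m" for i g
  proof -
    have "\<forall>l<r. S i (m+l) = 0" using Slow that n by auto
    then show ?thesis unfolding n sum_split_add by simp
  qed
  have highsum: "(\<Sum>l<n. S (m+i) l * g l) = (\<Sum>l<m. S (m+i) l * g l) + g (m+i)" if "i < r" for i g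
    unfolding n sum_split_add using Sdiag that r_def sum_delta_mult[OF that, of "\<lambda>l. g (m+l)"] by simp
  define M where "M = mat n (m+c) F"
  have AM: "mat m m (\<lambda>ij. M $$ ij) = L11 * Gk"
    by (rule eq_matI) (use c F1 lowsum mn in \<open>auto simp: M_def L11_def Gk_def scalar_prod_def atLeast0LessThan\<close>)
  have BM: "mat m c (\<lambda>(i,j). M $$ (i, j + m)) = L11 * BG"
    by (rule eq_matI) (use c F2 lowsum mn in \<open>auto simp: M_def L11_def BG_def scalar_prod_def atLeast0LessThan add.commute\<close>)
  have CM: "mat r m (\<lambda>(i,j). M $$ (i + m, j)) = L21 * Gk + CG"
    by (rule eq_matI) (use c F1 highsum mn in \<open>auto simp: r_def M_def L21_def Gk_def CG_def scalar_prod_def atLeast0LessThan add.commute\<close>)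
  have DM: "mat r c (\<lambda>(i,j). M $$ (i + m, j + m)) = L21 * BG + DG"
    by (rule eq_matI) (use c F2 highsum mn in \<open>auto simp: r_def M_def L21_def BG_def DG_def scalar_prod_def atLeast0LessThan add.commute\<close>)
  have sb: "split_block M m m = (L11 * Gk, L11 * BG, L21 * Gk + CG, L21 * BG + DG)"
    unfolding split_block_def Let_def using AM BM CM DM by (simp add: M_def r_def)
  have dA: "det (L11 * Gk) \<noteq> 0" using det_mult[OF c(1,2)] L11det Gdet unfolding L11_def Gk_def by simp
  obtain Ai where Ai: "mat_inverse (L11 * Gk) = Some Ai" "Ai * (L11 * Gk) = 1\<^sub>m m" "Ai \<in> carrier_mat m m"
    using inv_some[OF _ dA, of m] c by auto
  have Z: "Z1 * Gk + CG = 0\<^sub>m r m"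
    by (rule eq_matI) (use c Zc in \<open>auto simp: r_def Z1_def Gk_def CG_def scalar_prod_def atLeast0LessThan\<close>)
  have "qdet_last M m = Z1 * BG + DG"
    unfolding qdet_last_def sb using schur_core[OF c(1,2) Ai(3) c(3,4,5,6,7) Ai(2) Z] Ai(1) by simp
  also have "\<dots> = mat (n-m) c (\<lambda>(i,j). (\<Sum>l<m. Sc (m+i) l * f l j) + f (m+i) j)"
    by (rule eq_matI) (use c in \<open>auto simp: r_def Z1_def BG_def DG_def scalar_prod_def atLeast0LessThan\<close>)
  finally show ?thesis unfolding M_def .
qed




lemma blk_block: assumes "D \<ge> 1" "bs D k \<le> i" "i < bs D (Suc k)" shows "blk D i = k"
  using ix_props(2)[OF assms(1), of i k] ix_props(2)[OF assms(1), of i "Suc k"] assms by auto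

lemma blt_low: assumes "D \<ge> 1" "block_lower_unitriangular D S" "i < bs D k" "bs D k \<le> l"
  shows "S i l = 0"
proof -
  have "blk D i < k" using ix_props(2)[OF assms(1)] assms(3) by auto
  moreover have "\<not> blk D l < k" using ix_props(2)[OF assms(1), of l k] assms(4) by auto
  ultimately show ?thesis using assms(2) unfolding block_lower_unitriangular_def by auto
qed

lemma blt_diag: assumes "D \<ge> 1" "block_lower_unitriangular D S"
    "i < bs D (Suc k) - bs D k" "l < bs D (Suc k) - bs D k"
  shows "S (bs D k + i) (bs D k + l) = (if i = l then 1 else 0)"
proof -
  have "blk D (bs D k + i) = k" "blk D (bs D k + l) = k" using blk_block[OF assms(1)] assms(3,4) by auto
  then show ?thesis using assms(2) unfolding block_lower_unitriangular_def by auto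
qed

lemma blt_tri: assumes "D \<ge> 1" "block_lower_unitriangular D S" "i < j" shows "S i j = 0"
proof (cases "blk D i < blk D j")
  case True then show ?thesis using assms(2) unfolding block_lower_unitriangular_def by auto
next
  case False
  have "\<not> blk D j < blk D i"
  proof
    assume "blk D j < blk D i"
    then have "j < bs D (blk D i)" using ix_props(2)[OF assms(1)] by auto
    moreover have "\<not> i < bs D (blk D i)" using ix_props(2)[OF assms(1)] by auto
    ultimately show False using assms(3) by simp
  qed
  then have "blk D i = blk D j" using False by simp
  then show ?thesis using assms(2,3) unfolding block_lower_unitriangular_def by auto
qed

lemma det_trunc: assumes "D \<ge> 1" "block_lower_unitriangular D S" shows "det (trunc D S k) = 1"
proof -
  have "det (trunc D S k) = prod_list (diag_mat (trunc D S k))"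
    by (rule det_lower_triangular[of "bs D k"]) (use blt_tri[OF assms] in \<open>auto simp: trunc_def\<close>)
  also have "diag_mat (trunc D S k) = map (\<lambda>i. 1) [0..<bs D k]"
    using assms(2) unfolding diag_mat_def trunc_def block_lower_unitriangular_def by auto
  also have "prod_list \<dots> = 1"
  proof -
    have "prod_list (map (\<lambda>i::nat. 1::complex) xs) = 1" for xs by (induction xs) auto
    then show ?thesis .
  qed
  finally show ?thesis .
qed

lemma lowsum_gen: assumes "D \<ge> 1" "block_lower_unitriangular D S" "i < bs D k" "bs D k \<le> n"
  shows "(\<Sum>l<n. S i l * g l) = (\<Sum>l<bs D k. S i l * g l)"
  by (rule sum.mono_neutral_right) (use blt_low[OF assms(1,2,3)] assms(4) in auto)

lemma highsum_gen: assumes "D \<ge> 1" "block_lower_unitriangular D S" "i < bs D (Suc k) - bs D k"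
  shows "(\<Sum>l<bs D (Suc k). S (bs D k + i) l * g l) = (\<Sum>l<bs D k. S (bs D k + i) l * g l) + g (bs D k + i)"
proof -
  define m where "m = bs D k"
  define r where "r = bs D (Suc k) - bs D k"
  have n: "bs D (Suc k) = m + r" using bs_mono[of k "Suc k" D] unfolding m_def r_def by simp
  have "(\<Sum>l<r. S (m + i) (m + l) * g (m + l)) = (\<Sum>l<r. (if i = l then 1 else 0) * g (m + l))"
    using blt_diag[OF assms(1,2)] assms(3) unfolding m_def r_def by simp
  also have "\<dots> = g (m + i)" using sum_delta_mult[of i r "\<lambda>l. g (m+l)"] assms(3) unfolding r_def by simp
  finally show ?thesis unfolding n sum_split_add m_def by simp
qed




lemma W_facts:
  fixes k :: nat
  assumes D1: "D \<ge> 1" and gf: "gauss_fact D uc Sc Hc"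
  defines "m \<equiv> bs D k" and "n \<equiv> bs D (Suc k)"
  shows "\<forall>i<n-m. \<forall>j<m. (\<Sum>l<n. Sc (m+i) l * moment_mat D uc l j) = 0"
    and "\<forall>i<n-m. \<forall>j<n-m. (\<Sum>l<n. Sc (m+i) l * moment_mat D uc l (m+j)) = Hc (m+i) (m+j)"
proof -
  let ?G = "moment_mat D uc"
  have blt: "block_lower_unitriangular D Sc" and bd: "block_diagonal D Hc"
    using gf unfolding gauss_fact_def by auto
  have mn: "m \<le> n" unfolding m_def n_def by (rule bs_mono) simp
  define Sn where "Sn = trunc D Sc (Suc k)"
  define Hn where "Hn = trunc D Hc (Suc k)"
  define Gn where "Gn = trunc D ?G (Suc k)"
  have cS: "Sn \<in> carrier_mat n n" and cH: "Hn \<in> carrier_mat n n" and cG: "Gn \<in> carrier_mat n n"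
    unfolding Sn_def Hn_def Gn_def trunc_def n_def by auto
  obtain Ti where Ti: "mat_inverse Sn = Some Ti" "Sn * Ti = 1\<^sub>m n" "Ti * Sn = 1\<^sub>m n" "Ti \<in> carrier_mat n n"
    using inv_some[OF cS] det_trunc[OF D1 blt] unfolding Sn_def by force
  have Gn: "Gn = Ti * Hn * transpose_mat Ti"
    using gf Ti(1) unfolding gauss_fact_def Gn_def Sn_def Hn_def by simp
  have cTt: "transpose_mat Ti \<in> carrier_mat n n" "transpose_mat Sn \<in> carrier_mat n n" using Ti(4) cS by auto
  define W where "W = Sn * Gn"
  have "W = Sn * Ti * Hn * transpose_mat Ti"
    unfolding W_def Gn using cS Ti(4) cH cTt by (simp add: assoc_mult_mat[of _ n n _ n _ n])
  also have "\<dots> = Hn * transpose_mat Ti" using Ti(2) cH by simp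
  finally have W: "W = Hn * transpose_mat Ti" .
  have "W * transpose_mat Sn = Hn * (transpose_mat Ti * transpose_mat Sn)"
    unfolding W using cH cTt by simp
  also have "transpose_mat Ti * transpose_mat Sn = transpose_mat (Sn * Ti)"
    using transpose_mult[OF cS Ti(4)] by simp
  also have "\<dots> = 1\<^sub>m n" using Ti(2) by simp
  finally have WS: "W * transpose_mat Sn = Hn" using cH by simp
  have Went: "W $$ (a, b) = (\<Sum>l<n. Sc a l * ?G l b)" if "a < n" "b < n" for a b
    using that cS cG unfolding W_def Sn_def Gn_def
    by (simp add: trunc_def scalar_prod_def atLeast0LessThan n_def)
  have Hent: "Hc a c = (\<Sum>l<n. W $$ (a, l) * Sc c l)" if "a < n" "c < n" for a c
  proof -
    have "Hc a c = Hn $$ (a, c)" using that unfolding Hn_def trunc_def n_def by simp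
    also have "\<dots> = (W * transpose_mat Sn) $$ (a, c)" using WS by simp
    also have "\<dots> = (\<Sum>l<n. W $$ (a, l) * Sc c l)"
    proof -
      have cW: "dim_row W = n" "dim_col W = n" unfolding W_def using cS cG by auto
      show ?thesis using that cW unfolding Sn_def
        by (simp add: trunc_def scalar_prod_def atLeast0LessThan n_def)
    qed
    finally show ?thesis .
  qed
  define r where "r = n - m"
  define W' where "W' = mat r m (\<lambda>(i,l). W $$ (m+i, l))"
  define Sm where "Sm = trunc D Sc k"
  have cSm: "Sm \<in> carrier_mat m m" "transpose_mat Sm \<in> carrier_mat m m" unfolding Sm_def trunc_def m_def by auto
  have cW': "W' \<in> carrier_mat r m" unfolding W'_def by simp
  have "W' * transpose_mat Sm = 0\<^sub>m r m"
  proof (rule eq_matI)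
    fix i c assume ic: "i < dim_row (0\<^sub>m r m :: complex mat)" "c < dim_col (0\<^sub>m r m :: complex mat)"
    then have i: "i < r" and c: "c < m" by auto
    have "(W' * transpose_mat Sm) $$ (i, c) = (\<Sum>l<m. W $$ (m+i, l) * Sc c l)"
      using i c unfolding W'_def Sm_def by (simp add: trunc_def scalar_prod_def atLeast0LessThan m_def)
    also have "\<dots> = (\<Sum>l<n. W $$ (m+i, l) * Sc c l)"
      using lowsum_gen[OF D1 blt, of c k n "\<lambda>l. W $$ (m+i, l)"] c mn unfolding m_def
      by (simp add: mult.commute)
    also have "\<dots> = Hc (m+i) c" using Hent[of "m+i" c] i c mn unfolding r_def by simp
    also have "\<dots> = 0"
    proof -
      have "blk D (m+i) = k" using blk_block[OF D1] i unfolding r_def m_def n_def by auto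
      moreover have "blk D c < k" using ix_props(2)[OF D1] c unfolding m_def by auto
      ultimately show ?thesis using bd unfolding block_diagonal_def by auto
    qed
    finally show "(W' * transpose_mat Sm) $$ (i, c) = 0\<^sub>m r m $$ (i, c)" using i c by simp
  qed (use cW' cSm in auto)
  moreover obtain Y where Y: "transpose_mat Sm * Y = 1\<^sub>m m" "Y \<in> carrier_mat m m"
  proof -
    have "det (transpose_mat Sm) \<noteq> 0" using det_transpose[OF cSm(1)] det_trunc[OF D1 blt] unfolding Sm_def by simp
    then show ?thesis using inv_some[OF cSm(2)] that by blast
  qed
  ultimately have "W' = 0\<^sub>m r m"
  proof -
    assume z: "W' * transpose_mat Sm = 0\<^sub>m r m"
    have "W' = W' * (transpose_mat Sm * Y)" using Y cW' by simp
    also have "\<dots> = (W' * transpose_mat Sm) * Y" using cW' cSm Y by (simp add: assoc_mult_mat[of _ r m _ m _ m])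
    also have "\<dots> = 0\<^sub>m r m" using z Y by simp
    finally show ?thesis .
  qed
  then have W0: "W $$ (m+i, l) = 0" if "i < r" "l < m" for i l
  proof -
    have "W' $$ (i, l) = 0\<^sub>m r m $$ (i, l)" using \<open>W' = 0\<^sub>m r m\<close> by simp
    then show ?thesis using that unfolding W'_def by simp
  qed
  show "\<forall>i<n-m. \<forall>j<m. (\<Sum>l<n. Sc (m+i) l * ?G l j) = 0"
    using W0 Went mn unfolding r_def by (metis add_lessD1 less_diff_conv add.commute order_less_le_trans)
  show "\<forall>i<n-m. \<forall>j<n-m. (\<Sum>l<n. Sc (m+i) l * ?G l (m+j)) = Hc (m+i) (m+j)"
  proof (intro allI impI)
    fix i j assume i: "i < n - m" and j: "j < n - m"
    have "Hc (m+i) (m+j) = (\<Sum>l<n. Sc (m+j) l * W $$ (m+i, l))"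
      using Hent[of "m+i" "m+j"] i j by (simp add: mult.commute)
    also have "\<dots> = (\<Sum>l<m. Sc (m+j) l * W $$ (m+i, l)) + W $$ (m+i, m+j)"
      using highsum_gen[OF D1 blt, of j k "\<lambda>l. W $$ (m+i, l)"] j unfolding m_def n_def by simp
    also have "\<dots> = W $$ (m+i, m+j)" using W0 i unfolding r_def by simp
    also have "\<dots> = (\<Sum>l<n. Sc (m+i) l * ?G l (m+j))" using Went i j by simp
    finally show "(\<Sum>l<n. Sc (m+i) l * ?G l (m+j)) = Hc (m+i) (m+j)" by simp
  qed
qed




theorem mainTheorem3:
  fixes D :: nat and u uc :: "mpoly \<Rightarrow> complex" and Q2 :: mpoly
    and S H Sc Hc :: smat and k :: nat and x :: "nat \<Rightarrow> complex"
  assumes "D \<ge> 1"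
    and "lin_fun D u" and "lin_fun D uc"
    and "Q2 \<in> pring D"
    and "\<forall>p\<in>pring D. u p = uc (Q2 * p)"
    and "quasi_definite D u" and "quasi_definite D uc"
    and "gauss_fact D u S H" and "gauss_fact D uc Sc Hc"
    and "k \<ge> 1"
  shows "Pblock D Sc k x = qdet_last (bordered D (Rmat D uc S) S k x) (bs D k) \<and>
         Hblock D Hc k = qdet_last (trunc D (Rmat D uc S) (Suc k)) (bs D k)"
proof -
  note D1 = assms(1) and lin = assms(3) and qd = assms(7)
  define m where "m = bs D k"
  define n where "n = bs D (Suc k)"
  define G where "G = moment_mat D uc"
  define R where "R = Rmat D uc S"
  have blt: "block_lower_unitriangular D S" using assms(8) unfolding gauss_fact_def by auto
  have bltc: "block_lower_unitriangular D Sc" using assms(9) unfolding gauss_fact_def by auto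
  have mn: "m \<le> n" unfolding m_def n_def by (rule bs_mono) simp
  have n: "n = m + (n - m)" using mn by simp
  have Slow: "\<forall>i<m. \<forall>l. m \<le> l \<longrightarrow> l < n \<longrightarrow> S i l = 0"
    using blt_low[OF D1 blt] unfolding m_def by auto
  have Sdiag: "\<forall>i<n-m. \<forall>l<n-m. S (m+i) (m+l) = (if i = l then 1 else 0)"
    using blt_diag[OF D1 blt] unfolding m_def n_def by auto
  have L11det: "det (mat m m (\<lambda>(i,j). S i j)) \<noteq> 0"
    using det_trunc[OF D1 blt, of k] unfolding trunc_def m_def by simp
  have Gdet: "det (mat m m (\<lambda>(i,j). G i j)) \<noteq> 0"
    using qd unfolding quasi_definite_def trunc_def m_def G_def by auto
  have hs: "(\<Sum>l<n. Sc (m+i) l * g l) = (\<Sum>l<m. Sc (m+i) l * g l) + g (m+i)" if "i < n - m" for i g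
    using highsum_gen[OF D1 bltc, of i k g] that unfolding m_def n_def by simp
  have Zc: "\<forall>i<n-m. \<forall>j<m. (\<Sum>l<m. Sc (m+i) l * G l j) + G (m+i) j = 0"
    using W_facts(1)[OF D1 assms(9), of k] hs unfolding m_def n_def G_def by simp
  have Rexp: "R i j = (\<Sum>l<n. S i l * G l j)" if "i < n" for i j
  proof -
    have "blk D i < Suc k" using ix_props(2)[OF D1] that unfolding n_def by auto
    then have "bs D (Suc (blk D i)) \<le> n" unfolding n_def by (intro bs_mono) simp
    then show ?thesis using Rmat_expand[OF D1 lin blt] unfolding R_def G_def by simp
  qed
  have Pexp: "peval x (Ppol D S i) = (\<Sum>l<n. S i l * peval x (xmon (ix D l)))" if "i < n" for i
  proof -
    have "blk D i < Suc k" using ix_props(2)[OF D1] that unfolding n_def by auto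
    then have "bs D (Suc (blk D i)) \<le> n" unfolding n_def by (intro bs_mono) simp
    then show ?thesis using peval_Ppol[OF D1 blt] by simp
  qed
  have part2: "Hblock D Hc k = qdet_last (trunc D R (Suc k)) m"
  proof -
    have t: "trunc D R (Suc k) = mat n (m + (n - m)) (\<lambda>(i,j). R i j)"
      unfolding trunc_def n_def[symmetric] using n by simp
    have "qdet_last (trunc D R (Suc k)) m
        = mat (n-m) (n-m) (\<lambda>(i,j). (\<Sum>l<m. Sc (m+i) l * G l (m+j)) + G (m+i) (m+j))"
      unfolding t
      by (rule schur_gen[OF mn Slow Sdiag L11det Gdet _ _ Zc]) (use Rexp in auto)
    also have "\<dots> = Hblock D Hc k"
      unfolding Hblock_def n_def[symmetric] m_def[symmetric]
      by (rule eq_matI) (use hs W_facts(2)[OF D1 assms(9), of k] in \<open>auto simp: m_def n_def G_def\<close>)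
    finally show ?thesis by simp
  qed
  have part1: "Pblock D Sc k x = qdet_last (bordered D R S k x) m"
  proof -
    have t: "bordered D R S k x = mat n (m + 1) (\<lambda>(i,j). if j < m then R i j else peval x (Ppol D S i))"
      unfolding bordered_def n_def[symmetric] m_def[symmetric] by simp
    have "qdet_last (bordered D R S k x) m
        = mat (n-m) 1 (\<lambda>(i,j). (\<Sum>l<m. Sc (m+i) l * peval x (xmon (ix D l))) + peval x (xmon (ix D (m+i))))"
      unfolding t
      by (rule schur_gen[OF mn Slow Sdiag L11det Gdet _ _ Zc]) (use Rexp Pexp in auto)
    also have "\<dots> = Pblock D Sc k x"
    proof (rule eq_matI)
      fix i j assume ij: "i < dim_row (Pblock D Sc k x)" "j < dim_col (Pblock D Sc k x)"
      then have i: "i < n - m" and j: "j = 0" unfolding Pblock_def m_def n_def by auto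
      have "blk D (m+i) = k" using blk_block[OF D1] i unfolding m_def n_def by auto
      then have "peval x (Ppol D Sc (m+i)) = (\<Sum>l<n. Sc (m+i) l * peval x (xmon (ix D l)))"
        using peval_Ppol[OF D1 bltc, where N=n and i="m+i" and x=x] unfolding n_def by simp
      then show "mat (n-m) 1 (\<lambda>(i,j). (\<Sum>l<m. Sc (m+i) l * peval x (xmon (ix D l))) + peval x (xmon (ix D (m+i)))) $$ (i, j)
          = Pblock D Sc k x $$ (i, j)"
        using hs[OF i] i j unfolding Pblock_def m_def n_def by simp
    qed (auto simp: Pblock_def m_def n_def)
    finally show ?thesis by simp
  qed
  show ?thesis using part1 part2 unfolding R_def m_def by simp
qed


end
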